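(* Let $G$ be a simple graph on $n$ vertices with $cM_2(G)\ge cM_2(H)$ for every simple graph $H$ on $n$ vertices, and let $F$, $X$, $Y$, $N^+_F$ be as defined in the context. If $u,v\in X$ and $d_G(u)\ge d_G(v)$, then $N^+_F(u)\cap Y\supseteq N^+_F(v)\cap Y$.
   Context: All graphs are finite and simple; $d_G(u)$ is the degree of $u$ and $cM_2(G)=\sum_{uv\in E(G)}|d_G(u)^2-d_G(v)^2|$. The canonical mixed graph $F$ of $G$ has vertex set $V(G)$; for each edge $uv\in E(G)$: if $d_G(u)>d_G(v)$ then $F$ contains the arc $\overrightarrow{uv}$, and if $d_G(u)=d_G(v)$ then $F$ contains the undirected edge $uv$. $d^+_F(u)$ (resp. $d^-_F(u)$) is the number of arcs of $F$ with tail (resp. head) $u$; $N^+_F(u)=\{w:\overrightarrow{uw}\in A(F)\}$. $X=\{u\in V(G): d^+_F(u)\ge d^-_F(u)\}$ and $Y=\{u\in V(G): d^+_F(u)< d^-_F(u)\}$. *)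

theory Defs
  imports Main
begin

definition simple_graph :: "nat \<Rightarrow> nat set set \<Rightarrow> bool" where
  "simple_graph n E \<longleftrightarrow> E \<subseteq> {{a, b} | a b. a \<noteq> b \<and> a < n \<and> b < n}"

definition deg :: "nat set set \<Rightarrow> nat \<Rightarrow> nat" where
  "deg E u = card {e \<in> E. u \<in> e}"

text \<open>cM_2(G) = sum over edges uv of |d(u)^2 - d(v)^2|; each edge {a,b} is counted once
  via its orientation a < b.\<close>
definition cM2 :: "nat set set \<Rightarrow> int" where
  "cM2 E = (\<Sum>(a, b) \<in> {(a, b). {a, b} \<in> E \<and> a < b}.
              \<bar>int (deg E a) ^ 2 - int (deg E b) ^ 2\<bar>)"

text \<open>Canonical mixed graph F: arc u -> w iff uw is an edge and d(u) > d(w).\<close>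
definition out_nbrs :: "nat set set \<Rightarrow> nat \<Rightarrow> nat set" where
  "out_nbrs E u = {w. {u, w} \<in> E \<and> deg E u > deg E w}"

definition in_nbrs :: "nat set set \<Rightarrow> nat \<Rightarrow> nat set" where
  "in_nbrs E u = {w. {u, w} \<in> E \<and> deg E w > deg E u}"

definition outdeg :: "nat set set \<Rightarrow> nat \<Rightarrow> nat" where
  "outdeg E u = card (out_nbrs E u)"

definition indeg :: "nat set set \<Rightarrow> nat \<Rightarrow> nat" where
  "indeg E u = card (in_nbrs E u)"

definition Xset :: "nat \<Rightarrow> nat set set \<Rightarrow> nat set" where
  "Xset n E = {u. u < n \<and> outdeg E u \<ge> indeg E u}"

definition Yset :: "nat \<Rightarrow> nat set set \<Rightarrow> nat set" where
  "Yset n E = {u. u < n \<and> outdeg E u < indeg E u}"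

end

theory Submission
  imports Defs
begin

definition nb :: "nat set set \<Rightarrow> nat \<Rightarrow> nat set" where
  "nb E z = {b. {z, b} \<in> E}"

definition ind :: "nat set set \<Rightarrow> nat \<Rightarrow> nat \<Rightarrow> int" where
  "ind E a b = (if {a, b} \<in> E then 1 else 0)"

lemma sg_edge:
  assumes "simple_graph n E" "{a, b} \<in> E"
  shows "a \<noteq> b \<and> a < n \<and> b < n"
proof -
  from assms obtain c d where "{a,b} = {c,d}" "c \<noteq> d" "c < n" "d < n"
    unfolding simple_graph_def by blast
  then show ?thesis by (auto simp: doubleton_eq_iff)
qed

lemma ind_self: "simple_graph n E \<Longrightarrow> ind E a a = 0"
  using sg_edge[of n E a a] by (auto simp: ind_def)

lemma nb_sub:
  assumes "simple_graph n E" shows "nb E z \<subseteq> {..<n}"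
proof
  fix b assume "b \<in> nb E z"
  then have "{z, b} \<in> E" by (simp add: nb_def)
  then show "b \<in> {..<n}" using sg_edge[OF assms] by simp
qed

lemma nb_fin: "simple_graph n E \<Longrightarrow> finite (nb E z)"
  using nb_sub[of n E z] finite_subset[of "nb E z" "{..<n}"] by simp

lemma deg_nb:
  assumes "simple_graph n E"
  shows "deg E z = card (nb E z)"
proof -
  have inj: "inj_on (\<lambda>b. {z, b}) (nb E z)"
    by (auto simp: inj_on_def doubleton_eq_iff)
  have "(\<lambda>b. {z, b}) ` nb E z = {e \<in> E. z \<in> e}"
  proof
    show "(\<lambda>b. {z, b}) ` nb E z \<subseteq> {e \<in> E. z \<in> e}" by (auto simp: nb_def)
    show "{e \<in> E. z \<in> e} \<subseteq> (\<lambda>b. {z, b}) ` nb E z"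
    proof
      fix e assume e: "e \<in> {e \<in> E. z \<in> e}"
      then have "e \<in> {{a, b} | a b. a \<noteq> b \<and> a < n \<and> b < n}"
        using assms unfolding simple_graph_def by blast
      then obtain c d where cd: "e = {c,d}" by blast
      have eE: "e \<in> E" "z \<in> e" using e by auto
      show "e \<in> (\<lambda>b. {z, b}) ` nb E z"
      proof (cases "z = c")
        case True
        then have "e = {z, d}" using cd by simp
        then show ?thesis using eE by (auto simp: nb_def)
      next
        case False
        then have "z = d" using cd eE by auto
        then have "e = {z, c}" using cd by (simp add: insert_commute)
        then show ?thesis using eE by (auto simp: nb_def)
      qed
    qed
  qed
  then show ?thesis unfolding deg_def using card_image[OF inj] by simp
qed

lemma sum_excl3:
  fixes t :: "nat \<Rightarrow> int"
  assumes "finite A" "p \<in> A" "q \<in> A" "r \<in> A" "p \<noteq> q" "p \<noteq> r" "q \<noteq> r"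
  shows "(\<Sum>b\<in>A. if b \<in> {p,q,r} then 0 else t b) = (\<Sum>b\<in>A. t b) - t p - t q - t r"
proof -
  have s: "{p,q,r} \<subseteq> A" using assms by auto
  have "(\<Sum>b\<in>A. t b) = (\<Sum>b\<in>A - {p,q,r}. t b) + (\<Sum>b\<in>{p,q,r}. t b)"
    using sum.subset_diff[OF s assms(1)] by simp
  moreover have "(\<Sum>b\<in>A. if b \<in> {p,q,r} then 0 else t b) = (\<Sum>b\<in>A - {p,q,r}. t b)"
  proof -
    have "(\<Sum>b\<in>A. if b \<in> {p,q,r} then 0 else t b)
       = (\<Sum>b\<in>A - {p,q,r}. if b \<in> {p,q,r} then 0 else t b) + (\<Sum>b\<in>{p,q,r}. if b \<in> {p,q,r} then 0 else t b)"
      by (rule sum.subset_diff[OF s assms(1)])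
    moreover have "(\<Sum>b\<in>{p,q,r}. if b \<in> {p,q,r} then 0 else t b) = 0" by (intro sum.neutral) auto
    moreover have "(\<Sum>b\<in>A - {p,q,r}. if b \<in> {p,q,r} then 0 else t b) = (\<Sum>b\<in>A - {p,q,r}. t b)"
      by (intro sum.cong) auto
    ultimately show ?thesis by simp
  qed
  ultimately show ?thesis using assms by simp
qed

lemma sum_sym_decomp:
  fixes D :: "nat \<Rightarrow> nat \<Rightarrow> int"
  assumes fin: "finite I" and pq: "p \<in> I" "q \<in> I" "p \<noteq> q"
    and sym: "\<And>a b. D a b = D b a" and diag: "\<And>a. D a a = 0"
    and zero: "\<And>a b. a \<notin> {p,q} \<Longrightarrow> b \<notin> {p,q} \<Longrightarrow> D a b = 0"
  shows "(\<Sum>a\<in>I. \<Sum>b\<in>I. D a b) = 2 * ((\<Sum>b\<in>I. D p b) + (\<Sum>b\<in>I. D q b) - D p q)"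
proof -
  have s: "{p,q} \<subseteq> I" using pq by auto
  have row: "(\<Sum>b\<in>I. D a b) = D a p + D a q" if "a \<notin> {p,q}" for a
  proof -
    have "(\<Sum>b\<in>I. D a b) = (\<Sum>b\<in>I - {p,q}. D a b) + (\<Sum>b\<in>{p,q}. D a b)"
      using sum.subset_diff[OF s fin] by simp
    also have "(\<Sum>b\<in>I - {p,q}. D a b) = 0" using zero that by (intro sum.neutral) auto
    finally show ?thesis using pq by simp
  qed
  have "(\<Sum>a\<in>I. \<Sum>b\<in>I. D a b) = (\<Sum>a\<in>I - {p,q}. \<Sum>b\<in>I. D a b) + (\<Sum>a\<in>{p,q}. \<Sum>b\<in>I. D a b)"
    using sum.subset_diff[OF s fin] by simp
  also have "(\<Sum>a\<in>I - {p,q}. \<Sum>b\<in>I. D a b) = (\<Sum>a\<in>I - {p,q}. D a p + D a q)"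
    using row by (intro sum.cong) auto
  also have "\<dots> = (\<Sum>a\<in>I. D a p + D a q) - (\<Sum>a\<in>{p,q}. D a p + D a q)"
    using sum.subset_diff[OF s fin, of "\<lambda>a. D a p + D a q"] by simp
  also have "(\<Sum>a\<in>I. D a p + D a q) = (\<Sum>a\<in>I. D p a) + (\<Sum>a\<in>I. D q a)"
    by (simp add: sum.distrib sym)
  finally show ?thesis using pq by (simp add: diag sym[of q p])
qed

lemma sq_mono: "(int y ^ 2 \<le> int x ^ 2) = (y \<le> x)"
  by (simp add: power_mono_iff)

lemma tplus:
  fixes x y :: nat
  shows "\<bar>int (x+1) ^ 2 - int y ^ 2\<bar> - \<bar>int x ^ 2 - int y ^ 2\<bar>
     \<ge> (2 * int x + 1) * ((if y < x then 1 else 0) - (if x < y then 1 else 0))"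
proof (cases "y \<le> x")
  case True
  then have "int y ^ 2 \<le> int x ^ 2" "int y ^ 2 \<le> int (x+1) ^ 2" using sq_mono by auto
  then show ?thesis using True by (auto simp: power2_eq_square algebra_simps)
next
  case False
  then have "int (x+1) ^ 2 \<le> int y ^ 2" "int x ^ 2 \<le> int y ^ 2" using sq_mono[of "x+1" y] sq_mono[of x y] by auto
  then show ?thesis using False by (auto simp: power2_eq_square algebra_simps)
qed

lemma tminus:
  fixes x y :: nat
  assumes "x \<ge> 1"
  shows "\<bar>int (x-1) ^ 2 - int y ^ 2\<bar> - \<bar>int x ^ 2 - int y ^ 2\<bar>
     \<ge> - (2 * int x - 1) * ((if y < x then 1 else 0) - (if x < y then 1 else 0))"
proof (cases "y < x")
  case True
  then have "int y ^ 2 \<le> int (x-1) ^ 2" "int y ^ 2 \<le> int x ^ 2" using sq_mono[of y "x-1"] sq_mono[of y x] by auto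
  moreover have "int (x-1) = int x - 1" using assms by simp
  ultimately show ?thesis using True by (auto simp: power2_eq_square algebra_simps)
next
  case False
  then have "int (x-1) ^ 2 \<le> int y ^ 2" "int x ^ 2 \<le> int y ^ 2" using sq_mono[of "x-1" y] sq_mono[of x y] by auto
  moreover have "int (x-1) = int x - 1" using assms by simp
  ultimately show ?thesis using False by (auto simp: power2_eq_square algebra_simps)
qed

lemma cM2_double:
  assumes sg: "simple_graph n E"
  shows "2 * cM2 E = (\<Sum>a<n. \<Sum>b<n. ind E a b * \<bar>int (deg E a) ^ 2 - int (deg E b) ^ 2\<bar>)"
proof -
  define g where "g = (\<lambda>(a::nat, b::nat). \<bar>int (deg E a) ^ 2 - int (deg E b) ^ 2\<bar>)"
  define P where "P = {(a, b). {a, b} \<in> E \<and> a < b}"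
  define Q where "Q = {(a, b). {a, b} \<in> E}"
  have Qsub: "Q \<subseteq> {..<n} \<times> {..<n}" using sg_edge[OF sg] by (auto simp: Q_def)
  have finQ: "finite Q" using Qsub finite_subset by blast
  have PQ: "P \<subseteq> Q" by (auto simp: P_def Q_def)
  have finP: "finite P" using PQ finQ finite_subset by blast
  have Qeq: "Q = P \<union> prod.swap ` P"
  proof
    show "Q \<subseteq> P \<union> prod.swap ` P"
    proof
      fix x assume "x \<in> Q"
      then obtain a b where x: "x = (a,b)" "{a,b} \<in> E" by (auto simp: Q_def)
      then have "a \<noteq> b" using sg_edge[OF sg] by blast
      then show "x \<in> P \<union> prod.swap ` P"
        using x by (cases "a < b") (auto simp: P_def image_def insert_commute)
    qed
    show "P \<union> prod.swap ` P \<subseteq> Q" by (auto simp: P_def Q_def insert_commute)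
  qed
  have disj: "P \<inter> prod.swap ` P = {}" by (auto simp: P_def)
  have gs: "g (prod.swap x) = g x" for x by (cases x) (auto simp: g_def)
  have "(\<Sum>x\<in>prod.swap ` P. g x) = (\<Sum>x\<in>P. g (prod.swap x))"
    by (subst sum.reindex) (auto simp: inj_on_def)
  also have "\<dots> = (\<Sum>x\<in>P. g x)" using gs by simp
  finally have sw: "(\<Sum>x\<in>prod.swap ` P. g x) = (\<Sum>x\<in>P. g x)" .
  have "(\<Sum>x\<in>Q. g x) = (\<Sum>x\<in>P. g x) + (\<Sum>x\<in>prod.swap ` P. g x)"
    unfolding Qeq using finP disj by (intro sum.union_disjoint) auto
  then have Qs: "(\<Sum>x\<in>Q. g x) = 2 * cM2 E" using sw unfolding cM2_def P_def g_def by simp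
  have "(\<Sum>a<n. \<Sum>b<n. ind E a b * \<bar>int (deg E a) ^ 2 - int (deg E b) ^ 2\<bar>)
     = (\<Sum>x\<in>{..<n} \<times> {..<n}. (\<lambda>(a,b). ind E a b * \<bar>int (deg E a) ^ 2 - int (deg E b) ^ 2\<bar>) x)"
    by (simp add: sum.cartesian_product)
  also have "\<dots> = (\<Sum>x\<in>Q. g x)"
    by (rule sum.mono_neutral_cong_right) (use sg_edge[OF sg] in \<open>auto simp: Qsub Q_def g_def ind_def split: if_splits\<close>)
  finally show ?thesis using Qs by simp
qed

lemma move:
  assumes sg: "simple_graph n E" and lt: "p < n" "q < n" "r < n"
    and dist: "p \<noteq> q" "p \<noteq> r" "q \<noteq> r"
    and pr: "{p, r} \<in> E" and qr: "{q, r} \<notin> E"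
    and H: "H = insert {q, r} (E - {{p, r}})"
  shows "simple_graph n H \<and> cM2 H - cM2 E =
    (\<Sum>b<n. if b \<in> {p,q,r} then 0 else ind E p b *
        (\<bar>int (deg E p - 1) ^ 2 - int (deg E b) ^ 2\<bar> - \<bar>int (deg E p) ^ 2 - int (deg E b) ^ 2\<bar>))
  + (\<Sum>b<n. if b \<in> {p,q,r} then 0 else ind E q b *
        (\<bar>int (deg E q + 1) ^ 2 - int (deg E b) ^ 2\<bar> - \<bar>int (deg E q) ^ 2 - int (deg E b) ^ 2\<bar>))
  - \<bar>int (deg E p) ^ 2 - int (deg E r) ^ 2\<bar> + \<bar>int (deg E q + 1) ^ 2 - int (deg E r) ^ 2\<bar>
  + ind E p q * (\<bar>int (deg E p - 1) ^ 2 - int (deg E q + 1) ^ 2\<bar> - \<bar>int (deg E p) ^ 2 - int (deg E q) ^ 2\<bar>)"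
proof -
  have memH: "{a, b} \<in> H \<longleftrightarrow> ({a, b} = {q, r} \<or> ({a, b} \<in> E \<and> {a, b} \<noteq> {p, r}))" for a b
    using H by simp
  have sgH: "simple_graph n H"
  proof -
    have "{q, r} \<in> {{a, b} | a b. a \<noteq> b \<and> a < n \<and> b < n}" using lt dist by blast
    moreover have "E \<subseteq> {{a, b} | a b. a \<noteq> b \<and> a < n \<and> b < n}" using sg by (simp add: simple_graph_def)
    ultimately show ?thesis unfolding H simple_graph_def by blast
  qed
  have nbH: "nb H z = {b. (z = q \<and> b = r) \<or> (z = r \<and> b = q) \<or> ({z, b} \<in> E \<and> \<not> ((z = p \<and> b = r) \<or> (z = r \<and> b = p))) }" for z
    unfolding nb_def memH by (auto simp: doubleton_eq_iff)
  have rp: "r \<in> nb E p" using pr by (simp add: nb_def)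
  have rq: "r \<notin> nb E q" using qr by (simp add: nb_def)
  have qr': "q \<notin> nb E r" using qr by (simp add: nb_def insert_commute)
  have pr': "p \<in> nb E r" using pr by (simp add: nb_def insert_commute)
  have "nb H p = nb E p - {r}" using dist unfolding nbH by (auto simp: nb_def)
  then have degp: "deg H p = deg E p - 1"
    using deg_nb[OF sg] deg_nb[OF sgH] rp nb_fin[OF sg] by simp
  have "nb H q = insert r (nb E q)" using dist unfolding nbH by (auto simp: nb_def)
  then have degq: "deg H q = deg E q + 1"
    using deg_nb[OF sg] deg_nb[OF sgH] rq nb_fin[OF sg] by simp
  have "nb H r = insert q (nb E r - {p})" using dist unfolding nbH by (auto simp: nb_def)
  then have "deg H r = card (nb E r - {p}) + 1"
    using deg_nb[OF sgH] qr' nb_fin[OF sg] by simp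
  also have "\<dots> = deg E r"
  proof -
    have c1: "card (nb E r - {p}) = card (nb E r) - 1" using pr' by (simp add: card_Diff_singleton)
    have c2: "card (nb E r) > 0" using pr' nb_fin[OF sg] by (auto simp: card_gt_0_iff)
    show ?thesis using c1 c2 deg_nb[OF sg, of r] by linarith
  qed
  finally have degr: "deg H r = deg E r" .
  have degz: "deg H z = deg E z" if "z \<notin> {p,q}" for z
  proof (cases "z = r")
    case True then show ?thesis using degr by simp
  next
    case False
    then have "nb H z = nb E z" using that unfolding nbH by (auto simp: nb_def)
    then show ?thesis using deg_nb[OF sg] deg_nb[OF sgH] by simp
  qed
  define hE where "hE a b = \<bar>int (deg E a) ^ 2 - int (deg E b) ^ 2\<bar>" for a b
  define hH where "hH a b = \<bar>int (deg H a) ^ 2 - int (deg H b) ^ 2\<bar>" for a b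
  define D where "D a b = ind H a b * hH a b - ind E a b * hE a b" for a b
  have "2 * cM2 H - 2 * cM2 E = (\<Sum>a<n. \<Sum>b<n. D a b)"
    unfolding cM2_double[OF sg] cM2_double[OF sgH] D_def hE_def hH_def
    by (simp add: sum_subtractf)
  also have "\<dots> = 2 * ((\<Sum>b<n. D p b) + (\<Sum>b<n. D q b) - D p q)"
  proof (rule sum_sym_decomp)
    show "finite {..<n}" by simp
    show "p \<in> {..<n}" "q \<in> {..<n}" "p \<noteq> q" using lt dist by auto
    show "D a b = D b a" for a b
      by (simp add: D_def ind_def hH_def hE_def insert_commute abs_minus_commute)
    show "D a a = 0" for a using ind_self[OF sg] ind_self[OF sgH] by (simp add: D_def)
    show "D a b = 0" if "a \<notin> {p,q}" "b \<notin> {p,q}" for a b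
    proof -
      have "ind H a b = ind E a b" using that unfolding ind_def memH by (auto simp: doubleton_eq_iff)
      then show ?thesis using that degz by (simp add: D_def hH_def hE_def)
    qed
  qed
  finally have main: "cM2 H - cM2 E = (\<Sum>b<n. D p b) + (\<Sum>b<n. D q b) - D p q" by simp
  have inp: "ind H p b = ind E p b" if "b \<notin> {p,q,r}" for b
    using that unfolding ind_def memH by (auto simp: doubleton_eq_iff)
  have inq: "ind H q b = ind E q b" if "b \<notin> {p,q,r}" for b
    using that unfolding ind_def memH by (auto simp: doubleton_eq_iff)
  have Dpb: "D p b = ind E p b *
        (\<bar>int (deg E p - 1) ^ 2 - int (deg E b) ^ 2\<bar> - \<bar>int (deg E p) ^ 2 - int (deg E b) ^ 2\<bar>)"
    if "b \<notin> {p,q,r}" for b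
    using inp[OF that] degz[of b] that degp by (simp add: D_def hH_def hE_def algebra_simps)
  have Dqb: "D q b = ind E q b *
        (\<bar>int (deg E q + 1) ^ 2 - int (deg E b) ^ 2\<bar> - \<bar>int (deg E q) ^ 2 - int (deg E b) ^ 2\<bar>)"
    if "b \<notin> {p,q,r}" for b
    using inq[OF that] degz[of b] that degq by (simp add: D_def hH_def hE_def algebra_simps)
  have Dpp: "D p p = 0" "D q q = 0" using ind_self[OF sg] ind_self[OF sgH] by (simp_all add: D_def)
  have ipr: "ind H p r = 0" "ind E p r = 1" "ind H q r = 1" "ind E q r = 0"
    using pr qr dist unfolding ind_def memH by (auto simp: doubleton_eq_iff)
  have Dpr: "D p r = - \<bar>int (deg E p) ^ 2 - int (deg E r) ^ 2\<bar>"
    using ipr by (simp add: D_def hE_def)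
  have Dqr: "D q r = \<bar>int (deg E q + 1) ^ 2 - int (deg E r) ^ 2\<bar>"
    using ipr degq degr by (simp add: D_def hH_def)
  have ipq: "ind H p q = ind E p q" "ind H q p = ind E p q"
    using dist unfolding ind_def memH by (auto simp: doubleton_eq_iff insert_commute)
  have Dpq: "D p q = ind E p q * (\<bar>int (deg E p - 1) ^ 2 - int (deg E q + 1) ^ 2\<bar> - \<bar>int (deg E p) ^ 2 - int (deg E q) ^ 2\<bar>)"
    "D q p = ind E p q * (\<bar>int (deg E p - 1) ^ 2 - int (deg E q + 1) ^ 2\<bar> - \<bar>int (deg E p) ^ 2 - int (deg E q) ^ 2\<bar>)"
    using ipq degp degq by (simp_all add: D_def hH_def hE_def right_diff_distrib abs_minus_commute ind_def insert_commute)
  have sp: "(\<Sum>b<n. D p b) = (\<Sum>b<n. if b \<in> {p,q,r} then 0 else D p b) + D p p + D p q + D p r"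
    using sum_excl3[of "{..<n}" p q r "D p"] lt dist by simp
  have sq: "(\<Sum>b<n. D q b) = (\<Sum>b<n. if b \<in> {p,q,r} then 0 else D q b) + D q p + D q q + D q r"
    using sum_excl3[of "{..<n}" p q r "D q"] lt dist by simp
  have c1: "(\<Sum>b<n. if b \<in> {p,q,r} then 0 else D p b) = (\<Sum>b<n. if b \<in> {p,q,r} then 0 else ind E p b *
        (\<bar>int (deg E p - 1) ^ 2 - int (deg E b) ^ 2\<bar> - \<bar>int (deg E p) ^ 2 - int (deg E b) ^ 2\<bar>))"
    using Dpb by (intro sum.cong) auto
  have c2: "(\<Sum>b<n. if b \<in> {p,q,r} then 0 else D q b) = (\<Sum>b<n. if b \<in> {p,q,r} then 0 else ind E q b *
        (\<bar>int (deg E q + 1) ^ 2 - int (deg E b) ^ 2\<bar> - \<bar>int (deg E q) ^ 2 - int (deg E b) ^ 2\<bar>))"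
    using Dqb by (intro sum.cong) auto
  show ?thesis using sgH unfolding main sp sq c1 c2 Dpp Dpr Dqr Dpq by linarith
qed


definition sgf :: "nat set set \<Rightarrow> nat \<Rightarrow> nat \<Rightarrow> int" where
  "sgf E z b = (if deg E b < deg E z then 1 else 0) - (if deg E z < deg E b then 1 else 0)"

lemma count_s:
  assumes sg: "simple_graph n E"
  shows "(\<Sum>b<n. ind E z b * sgf E z b) = int (outdeg E z) - int (indeg E z)"
proof -
  have pt: "ind E z b * sgf E z b = of_bool (b \<in> out_nbrs E z) - of_bool (b \<in> in_nbrs E z)" for b
    by (auto simp: ind_def sgf_def out_nbrs_def in_nbrs_def)
  have o: "out_nbrs E z \<subseteq> {..<n}" using nb_sub[OF sg, of z] by (auto simp: out_nbrs_def nb_def)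
  have i: "in_nbrs E z \<subseteq> {..<n}" using nb_sub[OF sg, of z] by (auto simp: in_nbrs_def nb_def)
  have "(\<Sum>b<n. ind E z b * sgf E z b) = (\<Sum>b<n. of_bool (b \<in> out_nbrs E z)) - (\<Sum>b<n. of_bool (b \<in> in_nbrs E z))"
    by (simp only: pt sum_subtractf)
  also have "\<dots> = int (card ({..<n} \<inter> {b. b \<in> out_nbrs E z})) - int (card ({..<n} \<inter> {b. b \<in> in_nbrs E z}))"
    by simp
  also have "{..<n} \<inter> {b. b \<in> out_nbrs E z} = out_nbrs E z" using o by auto
  also have "{..<n} \<inter> {b. b \<in> in_nbrs E z} = in_nbrs E z" using i by auto
  finally show ?thesis by (simp add: outdeg_def indeg_def)
qed

lemma sum_lb:
  fixes f t :: "nat \<Rightarrow> int"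
  assumes "finite A" "p \<in> A" "q \<in> A" "r \<in> A" "p \<noteq> q" "p \<noteq> r" "q \<noteq> r"
    and le: "\<And>b. b \<in> A \<Longrightarrow> b \<notin> {p,q,r} \<Longrightarrow> c * t b \<le> f b"
  shows "c * ((\<Sum>b\<in>A. t b) - t p - t q - t r) \<le> (\<Sum>b\<in>A. if b \<in> {p,q,r} then 0 else f b)"
proof -
  have "c * ((\<Sum>b\<in>A. t b) - t p - t q - t r) = c * (\<Sum>b\<in>A. if b \<in> {p,q,r} then 0 else t b)"
    using sum_excl3[OF assms(1-7)] by simp
  also have "\<dots> = (\<Sum>b\<in>A. if b \<in> {p,q,r} then 0 else c * t b)"
    by (simp add: sum_distrib_left if_distrib cong: if_cong)
  also have "\<dots> \<le> (\<Sum>b\<in>A. if b \<in> {p,q,r} then 0 else f b)"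
    using le by (intro sum_mono) auto
  finally show ?thesis .
qed

lemma tm_ind:
  assumes "deg E z \<ge> 1"
  shows "- (2 * int (deg E z) - 1) * (ind E z b * sgf E z b) \<le> ind E z b *
        (\<bar>int (deg E z - 1) ^ 2 - int (deg E b) ^ 2\<bar> - \<bar>int (deg E z) ^ 2 - int (deg E b) ^ 2\<bar>)"
  using tminus[OF assms, of "deg E b"] by (auto simp: ind_def sgf_def)

lemma tp_ind:
  shows "(2 * int (deg E z) + 1) * (ind E z b * sgf E z b) \<le> ind E z b *
        (\<bar>int (deg E z + 1) ^ 2 - int (deg E b) ^ 2\<bar> - \<bar>int (deg E z) ^ 2 - int (deg E b) ^ 2\<bar>)"
  using tplus[of "deg E z" "deg E b"] by (auto simp: ind_def sgf_def)

lemma br1_int: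
  fixes U V :: int
  assumes "1 \<le> V" "V \<le> U"
  shows "0 \<le> (2*V-1)*(-(if V<U then 1 else 0)) - (2*U+1)*(if V<U then 1 else 0) + (\<bar>(V-1)^2 - (U+1)^2\<bar> - \<bar>V^2-U^2\<bar>)"
proof (cases "V < U")
  case True
  have "(V-1)^2 \<le> (U+1)^2" using assms by (intro power_mono) auto
  then have a: "\<bar>(V-1)^2 - (U+1)^2\<bar> = (U+1)^2 - (V-1)^2" by (simp add: abs_if)
  have "V^2 \<le> U^2" using assms by (intro power_mono) auto
  then have b: "\<bar>V^2-U^2\<bar> = U^2 - V^2" by (simp add: abs_if)
  show ?thesis using True a b by (simp add: power2_eq_square algebra_simps)
next
  case False
  then have "U = V" using assms by simp
  then show ?thesis by simp
qed

lemma br4_int: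
  fixes U V :: int
  assumes "1 \<le> V" "V \<le> U"
  shows "0 \<le> (2*U-1)*(if V<U then 1 else 0) - (2*V+1)*(-(if V<U then 1 else 0)) + (\<bar>(U-1)^2 - (V+1)^2\<bar> - \<bar>U^2-V^2\<bar>)"
proof (cases "V < U")
  case True
  have a: "(U-1)^2 - (V+1)^2 \<le> \<bar>(U-1)^2 - (V+1)^2\<bar>" by simp
  have "V^2 \<le> U^2" using assms by (intro power_mono) auto
  then have b: "\<bar>U^2-V^2\<bar> = U^2 - V^2" by (simp add: abs_if)
  have c: "(U-1)^2 - (V+1)^2 = U^2 - V^2 - 2*U - 2*V" by (simp add: power2_eq_square algebra_simps)
  show ?thesis using True a b c by simp
next
  case False
  then have "U = V" using assms by simp
  then show ?thesis by simp
qed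

lemma final_arith:
  fixes U V X a bb D1 D4 sx :: int
  assumes "1 \<le> V" "V \<le> U" "0 \<le> a" "0 \<le> bb" "0 \<le> X" "D1 \<le> 0" "D4 \<le> 0"
    and h1: "(2*U+1)*a - (2*V-1)*(bb-1) + ((U+1)^2 - V^2) \<le> D1"
    and h4: "-(2*U-1)*(a - sx) + (2*V+1)*bb - \<bar>U^2 - X^2\<bar> + \<bar>(V+1)^2 - X^2\<bar> \<le> D4"
    and sx: "sx = (if X < U then 1 else 0) - (if U < X then 1 else 0)"
  shows False
proof -
  have p1: "0 < (U+1)^2 - V^2" using assms power_strict_mono[of V "U+1" 2] by simp
  have p2: "0 \<le> (2*U+1)*a" using assms by simp
  have bb2: "bb \<ge> 2"
  proof (rule ccontr)
    assume "\<not> bb \<ge> 2"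
    then have "(2*V-1)*(bb-1) \<le> 0" using assms by (intro mult_nonneg_nonpos) auto
    then show False using h1 p1 p2 assms by linarith
  qed
  have e: "(2*U+1)*a - (2*V-1)*(bb-1) + ((U+1)^2 - V^2) + (-(2*U-1)*(a - sx) + (2*V+1)*bb - \<bar>U^2 - X^2\<bar> + \<bar>(V+1)^2 - X^2\<bar>)
     = 2*a + 2*bb + 2*V - 1 + (2*U-1)*sx + U^2 + 2*U + 1 - V^2 - \<bar>U^2 - X^2\<bar> + \<bar>(V+1)^2 - X^2\<bar>"
    by (simp add: power2_eq_square algebra_simps)
  have sum: "2*a + 2*bb + 2*V - 1 + (2*U-1)*sx + U^2 + 2*U + 1 - V^2 - \<bar>U^2 - X^2\<bar> + \<bar>(V+1)^2 - X^2\<bar> \<le> 0"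
    using h1 h4 e assms(6,7) by linarith
  have vv: "(V+1)^2 = V^2 + 2*V + 1" "(U+1)^2 = U^2 + 2*U + 1" by (simp_all add: power2_eq_square algebra_simps)
  consider "X < U" | "X = U" | "U < X" by linarith
  then show False
  proof cases
    case 1
    then have "X^2 \<le> U^2" using assms by (simp add: power_mono)
    then have "\<bar>U^2 - X^2\<bar> = U^2 - X^2" by simp
    moreover have "(V+1)^2 - X^2 \<le> \<bar>(V+1)^2 - X^2\<bar>" by simp
    moreover have "(2*U-1)*sx = 2*U-1" using 1 sx by simp
    ultimately show False using sum vv assms by linarith
  next
    case 2
    have "V^2 \<le> U^2" using assms by (intro power_mono) auto
    moreover have "0 \<le> \<bar>(V+1)^2 - X^2\<bar>" by simp
    moreover have "(2*U-1)*sx = 0" "\<bar>U^2 - X^2\<bar> = 0" using 2 sx by simp_all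
    ultimately show False using sum assms by linarith
  next
    case 3
    then have "(U+1)^2 \<le> X^2" using assms by (simp add: power_mono)
    moreover have "(V+1)^2 \<le> (U+1)^2" using assms by (simp add: power_mono)
    ultimately have q1: "U^2 \<le> X^2" "(V+1)^2 \<le> X^2" using vv assms by linarith+
    have "\<bar>U^2 - X^2\<bar> = X^2 - U^2" using q1(1) by (simp add: abs_if)
    moreover have "\<bar>(V+1)^2 - X^2\<bar> = X^2 - (V+1)^2" using q1(2) by (simp add: abs_if)
    moreover have "V^2 \<le> U^2" using assms by (intro power_mono) auto
    moreover have "(2*U-1)*sx = -(2*U-1)" using 3 sx by simp
    ultimately show False using sum vv assms bb2 by linarith
  qed
qed


lemma br1:
  assumes "deg E v \<le> deg E u" "1 \<le> deg E v"
  shows "0 \<le> (2 * int (deg E v) - 1) * (ind E v u * sgf E v u) - (2 * int (deg E u) + 1) * (ind E u v * sgf E u v)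
    + ind E v u * (\<bar>int (deg E v - 1) ^ 2 - int (deg E u + 1) ^ 2\<bar> - \<bar>int (deg E v) ^ 2 - int (deg E u) ^ 2\<bar>)"
proof (cases "{u, v} \<in> E")
  case True
  then have i: "ind E v u = 1" "ind E u v = 1" by (auto simp: ind_def insert_commute)
  have s: "sgf E v u = - (if int (deg E v) < int (deg E u) then 1 else 0)"
    "sgf E u v = (if int (deg E v) < int (deg E u) then 1 else 0)" using assms by (auto simp: sgf_def)
  have c: "int (deg E v - 1) = int (deg E v) - 1" "int (deg E u + 1) = int (deg E u) + 1" using assms by auto
  show ?thesis using br1_int[of "int (deg E v)" "int (deg E u)"] assms unfolding i s c by simp
next
  case False
  then have i: "ind E v u = 0" "ind E u v = 0" by (auto simp: ind_def insert_commute)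
  show ?thesis unfolding i by simp
qed

lemma br4:
  assumes "deg E v \<le> deg E u" "1 \<le> deg E v"
  shows "0 \<le> (2 * int (deg E u) - 1) * (ind E u v * sgf E u v) - (2 * int (deg E v) + 1) * (ind E v u * sgf E v u)
    + ind E u v * (\<bar>int (deg E u - 1) ^ 2 - int (deg E v + 1) ^ 2\<bar> - \<bar>int (deg E u) ^ 2 - int (deg E v) ^ 2\<bar>)"
proof (cases "{u, v} \<in> E")
  case True
  then have i: "ind E v u = 1" "ind E u v = 1" by (auto simp: ind_def insert_commute)
  have s: "sgf E v u = - (if int (deg E v) < int (deg E u) then 1 else 0)"
    "sgf E u v = (if int (deg E v) < int (deg E u) then 1 else 0)" using assms by (auto simp: sgf_def)
  have c: "int (deg E u - 1) = int (deg E u) - 1" "int (deg E v + 1) = int (deg E v) + 1" using assms by auto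
  show ?thesis using br4_int[of "int (deg E v)" "int (deg E u)"] assms unfolding i s c by simp
next
  case False
  then have i: "ind E v u = 0" "ind E u v = 0" by (auto simp: ind_def insert_commute)
  show ?thesis unfolding i by simp
qed

lemma comb1:
  fixes S1v S1u D1 U V W bb a T T' K :: int
  assumes "- (2*V - 1) * (bb - T - 1) \<le> S1v" "(2*U+1) * (a - T') \<le> S1u"
    and "0 \<le> (2*V-1)*T - (2*U+1)*T' + K"
    and "D1 = S1v + S1u - (V^2 - W^2) + ((U+1)^2 - W^2) + K"
  shows "(2*U+1)*a - (2*V-1)*(bb-1) + ((U+1)^2 - V^2) \<le> D1"
proof -
  have e: "- (2*V - 1) * (bb - T - 1) + (2*U+1) * (a - T') - (V^2 - W^2) + ((U+1)^2 - W^2)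
    = (2*U+1)*a - (2*V-1)*(bb-1) + ((U+1)^2 - V^2) + ((2*V-1)*T - (2*U+1)*T')" by (simp add: algebra_simps power2_eq_square)
  show ?thesis using assms e by linarith
qed

lemma comb4:
  fixes S4v S4u D4 U V Y bb a T T' K sx :: int
  assumes "- (2*U - 1) * (a - T' - sx) \<le> S4u" "(2*V+1) * (bb - T) \<le> S4v"
    and "0 \<le> (2*U-1)*T' - (2*V+1)*T + K"
    and "D4 = S4u + S4v - Y + K"
  shows "-(2*U-1)*(a - sx) + (2*V+1)*bb - Y \<le> D4"
proof -
  have e: "- (2*U - 1) * (a - T' - sx) + (2*V+1) * (bb - T) - Y
    = -(2*U-1)*(a - sx) + (2*V+1)*bb - Y + ((2*U-1)*T' - (2*V+1)*T)" by (simp add: algebra_simps power2_eq_square)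
  show ?thesis using assms e by linarith
qed


theorem claim5:
  fixes n :: nat and E :: "nat set set" and u v :: nat
  assumes "simple_graph n E"
    and "\<And>H. simple_graph n H \<Longrightarrow> cM2 E \<ge> cM2 H"
    and "u \<in> Xset n E" and "v \<in> Xset n E"
    and "deg E u \<ge> deg E v"
  shows "out_nbrs E v \<inter> Yset n E \<subseteq> out_nbrs E u \<inter> Yset n E"
proof
  note sg = assms(1) and mx = assms(2) and duv = assms(5)
  fix w assume w: "w \<in> out_nbrs E v \<inter> Yset n E"
  then have vw: "{v, w} \<in> E" "deg E w < deg E v" and wY: "w < n" "outdeg E w < indeg E w"
    by (auto simp: out_nbrs_def Yset_def)
  have uX: "u < n" "indeg E u \<le> outdeg E u" using assms(3) by (auto simp: Xset_def)
  have vX: "v < n" "indeg E v \<le> outdeg E v" using assms(4) by (auto simp: Xset_def)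
  show "w \<in> out_nbrs E u \<inter> Yset n E"
  proof (cases "u = v")
    case True then show ?thesis using w by simp
  next
    case False
    have "{u, w} \<in> E"
    proof (rule ccontr)
      assume uw: "{u, w} \<notin> E"
      have uw_ne: "u \<noteq> w" using uX wY by auto
      have vw_ne: "v \<noteq> w" using sg_edge[OF sg vw(1)] by simp
      have wnb: "w \<in> nb E v" using vw by (simp add: nb_def)
      have dv1: "1 \<le> deg E v"
        using deg_nb[OF sg, of v] wnb nb_fin[OF sg, of v] by (metis One_nat_def Suc_leI card_gt_0_iff empty_iff)
      have "\<exists>x. {u, x} \<in> E \<and> {v, x} \<notin> E \<and> x \<noteq> v"
      proof (rule ccontr)
        assume nx: "\<not> (\<exists>x. {u, x} \<in> E \<and> {v, x} \<notin> E \<and> x \<noteq> v)"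
        have sub: "nb E u - {v} \<subseteq> nb E v - {u, w}"
        proof
          fix b assume b: "b \<in> nb E u - {v}"
          then have ub: "{u, b} \<in> E" "b \<noteq> v" by (auto simp: nb_def)
          then have "{v, b} \<in> E" using nx by blast
          moreover have "b \<noteq> u" using sg_edge[OF sg ub(1)] by simp
          moreover have "b \<noteq> w" using ub uw by auto
          ultimately show "b \<in> nb E v - {u, w}" by (simp add: nb_def)
        qed
        have c1: "card (nb E u - {v}) \<le> card (nb E v - {u, w})"
          using sub nb_fin[OF sg, of v] by (intro card_mono) auto
        have sym: "v \<in> nb E u \<longleftrightarrow> u \<in> nb E v" by (simp add: nb_def insert_commute)
        show False
        proof (cases "v \<in> nb E u")
          case True
          then have un: "u \<in> nb E v" using sym by simp
          have "card (nb E u - {v}) = deg E u - 1" using True deg_nb[OF sg, of u] by (simp add: card_Diff_singleton)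
          moreover have "card (nb E v - {u, w}) = deg E v - 2"
          proof -
            have "{u, w} \<subseteq> nb E v" using un wnb by simp
            then have "card (nb E v - {u, w}) = card (nb E v) - card {u, w}"
              using nb_fin[OF sg, of v] by (simp add: card_Diff_subset)
            then show ?thesis using uw_ne deg_nb[OF sg, of v] by simp
          qed
          moreover have "2 \<le> deg E v"
          proof -
            have "{u, w} \<subseteq> nb E v" using un wnb by simp
            then have "card {u, w} \<le> card (nb E v)" using nb_fin[OF sg, of v] by (intro card_mono) auto
            then show ?thesis using uw_ne deg_nb[OF sg, of v] by simp
          qed
          ultimately show False using c1 duv by linarith
        next
          case False
          then have un: "u \<notin> nb E v" using sym by simp
          have "card (nb E u - {v}) = deg E u" using False deg_nb[OF sg, of u] by simp
          moreover have "card (nb E v - {u, w}) = deg E v - 1"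
          proof -
            have "nb E v - {u, w} = nb E v - {w}" using un by auto
            then show ?thesis using wnb deg_nb[OF sg, of v] by (simp add: card_Diff_singleton)
          qed
          ultimately show False using c1 duv dv1 by linarith
        qed
      qed
      then obtain x where x: "{u, x} \<in> E" "{v, x} \<notin> E" "x \<noteq> v" by blast
      have ux_ne: "u \<noteq> x" and xn: "x < n" using sg_edge[OF sg x(1)] by auto
      have xnb: "x \<in> nb E u" using x by (simp add: nb_def)
      have du1: "1 \<le> deg E u" using dv1 duv by simp
      define H1 where "H1 = insert {u, w} (E - {{v, w}})"
      define H4 where "H4 = insert {v, x} (E - {{u, x}})"
      note m1 = move[OF sg vX(1) uX(1) wY(1) False[symmetric] vw_ne uw_ne vw(1) uw H1_def]
      note m4 = move[OF sg uX(1) vX(1) xn False ux_ne x(3)[symmetric] x(1) x(2) H4_def]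
      have le1: "cM2 H1 - cM2 E \<le> 0" using mx[OF conjunct1[OF m1]] by simp
      have le4: "cM2 H4 - cM2 E \<le> 0" using mx[OF conjunct1[OF m4]] by simp
      define U where "U = int (deg E u)"
      define V where "V = int (deg E v)"
      define W where "W = int (deg E w)"
      define X where "X = int (deg E x)"
      define a where "a = int (outdeg E u) - int (indeg E u)"
      define bb where "bb = int (outdeg E v) - int (indeg E v)"
      have cu: "(\<Sum>b<n. ind E u b * sgf E u b) = a" using count_s[OF sg] a_def by simp
      have cv: "(\<Sum>b<n. ind E v b * sgf E v b) = bb" using count_s[OF sg] bb_def by simp
      have iuu: "ind E u u = 0" "ind E v v = 0" using ind_self[OF sg] by auto
      have ivw: "ind E v w = 1" "ind E u w = 0" "ind E u x = 1" "ind E v x = 0"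
        using vw uw x by (auto simp: ind_def)
      have svw: "sgf E v w = 1" using vw by (simp add: sgf_def)
      have S1v: "- (2*V - 1) * (bb - ind E v u * sgf E v u - 1) \<le> (\<Sum>b<n. if b \<in> {v,u,w} then 0 else ind E v b *
        (\<bar>int (deg E v - 1) ^ 2 - int (deg E b) ^ 2\<bar> - \<bar>int (deg E v) ^ 2 - int (deg E b) ^ 2\<bar>))"
      proof -
        have "- (2 * int (deg E v) - 1) * ((\<Sum>b<n. ind E v b * sgf E v b) - ind E v v * sgf E v v - ind E v u * sgf E v u - ind E v w * sgf E v w)
          \<le> (\<Sum>b<n. if b \<in> {v,u,w} then 0 else ind E v b *
        (\<bar>int (deg E v - 1) ^ 2 - int (deg E b) ^ 2\<bar> - \<bar>int (deg E v) ^ 2 - int (deg E b) ^ 2\<bar>))"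
          by (rule sum_lb) (use vX uX wY False vw_ne uw_ne tm_ind[OF dv1] in auto)
        then show ?thesis unfolding cv using iuu ivw svw V_def by simp
      qed
      have S1u: "(2*U + 1) * (a - ind E u v * sgf E u v) \<le> (\<Sum>b<n. if b \<in> {v,u,w} then 0 else ind E u b *
        (\<bar>int (deg E u + 1) ^ 2 - int (deg E b) ^ 2\<bar> - \<bar>int (deg E u) ^ 2 - int (deg E b) ^ 2\<bar>))"
      proof -
        have "(2 * int (deg E u) + 1) * ((\<Sum>b<n. ind E u b * sgf E u b) - ind E u v * sgf E u v - ind E u u * sgf E u u - ind E u w * sgf E u w)
          \<le> (\<Sum>b<n. if b \<in> {v,u,w} then 0 else ind E u b *
        (\<bar>int (deg E u + 1) ^ 2 - int (deg E b) ^ 2\<bar> - \<bar>int (deg E u) ^ 2 - int (deg E b) ^ 2\<bar>))"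
          by (rule sum_lb) (use vX uX wY False vw_ne uw_ne tp_ind in auto)
        then show ?thesis unfolding cu using iuu ivw U_def by simp
      qed
      have ab1: "\<bar>int (deg E v) ^ 2 - int (deg E w) ^ 2\<bar> = V^2 - W^2"
        unfolding V_def W_def by (rule abs_of_nonneg) (use vw(2) in simp)
      have ab2: "\<bar>int (deg E u + 1) ^ 2 - int (deg E w) ^ 2\<bar> = (U+1)^2 - W^2"
      proof -
        have e: "int (deg E u + 1) = U + 1" by (simp add: U_def)
        have "W \<le> U + 1" using vw(2) duv unfolding U_def W_def by simp
        then have "W^2 \<le> (U+1)^2" unfolding W_def by (intro power_mono) auto
        then show ?thesis unfolding e W_def[symmetric] by simp
      qed
      define K1 where "K1 = ind E v u * (\<bar>int (deg E v - 1) ^ 2 - int (deg E u + 1) ^ 2\<bar> - \<bar>int (deg E v) ^ 2 - int (deg E u) ^ 2\<bar>)"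
      have br: "0 \<le> (2*V-1)*(ind E v u * sgf E v u) - (2*U+1)*(ind E u v * sgf E u v) + K1"
        using br1[OF duv dv1] unfolding U_def V_def K1_def .
      have D1: "(2*U+1)*a - (2*V-1)*(bb-1) + ((U+1)^2 - V^2) \<le> cM2 H1 - cM2 E"
        by (rule comb1[OF S1v S1u br]) (use conjunct2[OF m1] ab1 ab2 in \<open>simp add: K1_def\<close>)
      define sx where "sx = sgf E u x"
      have S4u: "- (2*U - 1) * (a - ind E u v * sgf E u v - sx) \<le> (\<Sum>b<n. if b \<in> {u,v,x} then 0 else ind E u b *
        (\<bar>int (deg E u - 1) ^ 2 - int (deg E b) ^ 2\<bar> - \<bar>int (deg E u) ^ 2 - int (deg E b) ^ 2\<bar>))"
      proof -
        have "- (2 * int (deg E u) - 1) * ((\<Sum>b<n. ind E u b * sgf E u b) - ind E u u * sgf E u u - ind E u v * sgf E u v - ind E u x * sgf E u x)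
          \<le> (\<Sum>b<n. if b \<in> {u,v,x} then 0 else ind E u b *
        (\<bar>int (deg E u - 1) ^ 2 - int (deg E b) ^ 2\<bar> - \<bar>int (deg E u) ^ 2 - int (deg E b) ^ 2\<bar>))"
          by (rule sum_lb) (use vX uX xn False ux_ne x(3) tm_ind[OF du1] in auto)
        then show ?thesis unfolding cu using iuu ivw U_def sx_def by simp
      qed
      have S4v: "(2*V + 1) * (bb - ind E v u * sgf E v u) \<le> (\<Sum>b<n. if b \<in> {u,v,x} then 0 else ind E v b *
        (\<bar>int (deg E v + 1) ^ 2 - int (deg E b) ^ 2\<bar> - \<bar>int (deg E v) ^ 2 - int (deg E b) ^ 2\<bar>))"
      proof -
        have "(2 * int (deg E v) + 1) * ((\<Sum>b<n. ind E v b * sgf E v b) - ind E v u * sgf E v u - ind E v v * sgf E v v - ind E v x * sgf E v x)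
          \<le> (\<Sum>b<n. if b \<in> {u,v,x} then 0 else ind E v b *
        (\<bar>int (deg E v + 1) ^ 2 - int (deg E b) ^ 2\<bar> - \<bar>int (deg E v) ^ 2 - int (deg E b) ^ 2\<bar>))"
          by (rule sum_lb) (use vX uX xn False ux_ne x(3) tp_ind in auto)
        then show ?thesis unfolding cv using iuu ivw V_def by simp
      qed
      have eU: "int (deg E u) = U" and eV1: "int (deg E v + 1) = V + 1" and eX: "int (deg E x) = X"
        by (simp_all add: U_def V_def X_def)
      define K4 where "K4 = ind E u v * (\<bar>int (deg E u - 1) ^ 2 - int (deg E v + 1) ^ 2\<bar> - \<bar>int (deg E u) ^ 2 - int (deg E v) ^ 2\<bar>)"
      have br': "0 \<le> (2*U-1)*(ind E u v * sgf E u v) - (2*V+1)*(ind E v u * sgf E v u) + K4"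
        using br4[OF duv dv1] unfolding U_def V_def K4_def .
      have D4: "-(2*U-1)*(a - sx) + (2*V+1)*bb - (\<bar>U^2 - X^2\<bar> - \<bar>(V+1)^2 - X^2\<bar>) \<le> cM2 H4 - cM2 E"
        by (rule comb4[OF S4u S4v br']) (use conjunct2[OF m4] in \<open>simp only: K4_def eU eV1 eX\<close>)
      have sxv: "sx = (if X < U then 1 else 0) - (if U < X then 1 else 0)"
        unfolding sx_def sgf_def X_def U_def by simp
      have "0 \<le> a" "0 \<le> bb" using uX vX a_def bb_def by auto
      moreover have "1 \<le> V" "V \<le> U" "0 \<le> X" using dv1 duv unfolding V_def U_def X_def by auto
      ultimately show False
        using final_arith[of V U a bb X "cM2 H1 - cM2 E" "cM2 H4 - cM2 E" sx] le1 le4 D1 D4 sxv by linarith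
    qed
    then show ?thesis using w duv vw by (auto simp: out_nbrs_def)
  qed
qed

end
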